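(* Let $A\in\Bbbk^{\theta\times\theta}$ be such that $\mathfrak{g}(A)$ is finite dimensional. Then $(\operatorname{ad}e_i)^p=(\operatorname{ad}f_i)^p=0$ on $\mathfrak{g}(A)$ for all $i\in\{1,\dots,\theta\}$.
   Context: $\Bbbk$ algebraically closed of characteristic $p>0$; $A=(a_{jk})$ with $a_{jj}\in\{0,2\}$ and $a_{jk}=0$ iff $a_{kj}=0$ for $j\ne k$. $\mathfrak{g}(A)$ is the contragredient Lie algebra: fix $\mathfrak{h}$ of dimension $2\theta-\operatorname{rank}A$, linearly independent $\xi_1,\dots,\xi_\theta\in\mathfrak{h}^*$, $h_1,\dots,h_\theta\in\mathfrak{h}$ with $\xi_k(h_j)=a_{jk}$; $\mathfrak{g}(A)$ is the Lie algebra generated by $\mathfrak{h}$ and $e_j,f_j$ ($1\le j\le\theta$) with relations $[h,h']=0$, $[h,e_j]=\xi_j(h)e_j$, $[h,f_j]=-\xi_j(h)f_j$, $[e_j,f_k]=\delta_{jk}h_j$, divided by the largest ideal which is graded (for $\deg e_j=1$, $\deg f_j=-1$, $\deg\mathfrak{h}=0$) and meets $\mathfrak{h}$ trivially. *)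

theory Defs
  imports "HOL-Analysis.Finite_Cartesian_Product" "HOL-Computational_Algebra.Polynomial"
begin

definition alg_closed_field :: "'k::field itself \<Rightarrow> bool" where
  "alg_closed_field _ \<longleftrightarrow> (\<forall>q :: 'k poly. degree q > 0 \<longrightarrow> (\<exists>x. poly q x = 0))"

definition mat_rank :: "('n::finite \<Rightarrow> 'n \<Rightarrow> 'k::field) \<Rightarrow> nat" where
  "mat_rank A = vector_space.dim (\<lambda>(c::'k) (v::'k^'n). \<chi> i. c * v $ i)
                  {(\<chi> j. A j k) | k. True}"

definition lie_algebra :: "('k::field \<Rightarrow> 'L::ab_group_add \<Rightarrow> 'L) \<Rightarrow> ('L \<Rightarrow> 'L \<Rightarrow> 'L) \<Rightarrow> bool" where
  "lie_algebra sc br \<longleftrightarrow> vector_space sc \<and>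
     (\<forall>x y z. br (x + y) z = br x z + br y z \<and> br x (y + z) = br x y + br x z) \<and>
     (\<forall>a x y. br (sc a x) y = sc a (br x y) \<and> br x (sc a y) = sc a (br x y)) \<and>
     (\<forall>x. br x x = 0) \<and>
     (\<forall>x y z. br x (br y z) + br y (br z x) + br z (br x y) = 0)"

definition lie_subalgebra :: "('k::field \<Rightarrow> 'L::ab_group_add \<Rightarrow> 'L) \<Rightarrow> ('L \<Rightarrow> 'L \<Rightarrow> 'L) \<Rightarrow> 'L set \<Rightarrow> bool" where
  "lie_subalgebra sc br S \<longleftrightarrow> module.subspace sc S \<and> (\<forall>x\<in>S. \<forall>y\<in>S. br x y \<in> S)"

definition lie_generated :: "('k::field \<Rightarrow> 'L::ab_group_add \<Rightarrow> 'L) \<Rightarrow> ('L \<Rightarrow> 'L \<Rightarrow> 'L) \<Rightarrow> 'L set \<Rightarrow> 'L set" where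
  "lie_generated sc br X = \<Inter>{S. lie_subalgebra sc br S \<and> X \<subseteq> S}"

definition lie_ideal :: "('k::field \<Rightarrow> 'L::ab_group_add \<Rightarrow> 'L) \<Rightarrow> ('L \<Rightarrow> 'L \<Rightarrow> 'L) \<Rightarrow> 'L set \<Rightarrow> bool" where
  "lie_ideal sc br I \<longleftrightarrow> module.subspace sc I \<and> (\<forall>x y. y \<in> I \<longrightarrow> br x y \<in> I)"

definition homog_decomp :: "(int \<Rightarrow> 'L set) \<Rightarrow> 'L::ab_group_add \<Rightarrow> (int \<Rightarrow> 'L) \<Rightarrow> bool" where
  "homog_decomp G x c \<longleftrightarrow> finite {n. c n \<noteq> 0} \<and> (\<forall>n. c n \<in> G n) \<and> x = sum c {n. c n \<noteq> 0}"

definition Z_grading :: "('k::field \<Rightarrow> 'L::ab_group_add \<Rightarrow> 'L) \<Rightarrow> ('L \<Rightarrow> 'L \<Rightarrow> 'L) \<Rightarrow> (int \<Rightarrow> 'L set) \<Rightarrow> bool" where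
  "Z_grading sc br G \<longleftrightarrow> (\<forall>n. module.subspace sc (G n)) \<and>
     (\<forall>x. \<exists>!c. homog_decomp G x c) \<and>
     (\<forall>m n x y. x \<in> G m \<longrightarrow> y \<in> G n \<longrightarrow> br x y \<in> G (m + n))"

definition graded_ideal :: "('k::field \<Rightarrow> 'L::ab_group_add \<Rightarrow> 'L) \<Rightarrow> ('L \<Rightarrow> 'L \<Rightarrow> 'L) \<Rightarrow> (int \<Rightarrow> 'L set) \<Rightarrow> 'L set \<Rightarrow> bool" where
  "graded_ideal sc br G I \<longleftrightarrow> lie_ideal sc br I \<and>
     (\<forall>x\<in>I. \<forall>c. homog_decomp G x c \<longrightarrow> (\<forall>n. c n \<in> I))"

text \<open>(L, sc, br) together with H (the Cartan subalgebra h, a subspace of L), hh (the h_j),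
  xi (the xi_k, linear functionals on H), e, f is (isomorphic to) the contragredient Lie algebra g(A):
  it satisfies the defining relations, is generated by H and the e_j, f_j, is graded with
  deg e_j = 1, deg f_j = -1, deg H = 0, and has no nonzero graded ideal meeting H trivially
  (i.e. the largest such ideal has been divided out).\<close>
definition contragredient ::
  "('k::field \<Rightarrow> 'L::ab_group_add \<Rightarrow> 'L) \<Rightarrow> ('L \<Rightarrow> 'L \<Rightarrow> 'L) \<Rightarrow> ('n::finite \<Rightarrow> 'n \<Rightarrow> 'k) \<Rightarrow>
   'L set \<Rightarrow> ('n \<Rightarrow> 'L) \<Rightarrow> ('n \<Rightarrow> 'L \<Rightarrow> 'k) \<Rightarrow> ('n \<Rightarrow> 'L) \<Rightarrow> ('n \<Rightarrow> 'L) \<Rightarrow> bool" where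
  "contragredient sc br A H hh xi e f \<longleftrightarrow>
     lie_algebra sc br \<and>
     module.subspace sc H \<and>
     vector_space.dim sc H = 2 * CARD('n) - mat_rank A \<and>
     (\<forall>k. \<forall>x\<in>H. \<forall>y\<in>H. xi k (x + y) = xi k x + xi k y) \<and>
     (\<forall>k a. \<forall>x\<in>H. xi k (sc a x) = a * xi k x) \<and>
     (\<forall>c. (\<forall>x\<in>H. (\<Sum>k\<in>UNIV. c k * xi k x) = 0) \<longrightarrow> (\<forall>k. c k = 0)) \<and>
     (\<forall>j. hh j \<in> H) \<and>
     (\<forall>j k. xi k (hh j) = A j k) \<and>
     (\<forall>x\<in>H. \<forall>y\<in>H. br x y = 0) \<and>
     (\<forall>x\<in>H. \<forall>j. br x (e j) = sc (xi j x) (e j)) \<and>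
     (\<forall>x\<in>H. \<forall>j. br x (f j) = - sc (xi j x) (f j)) \<and>
     (\<forall>j k. br (e j) (f k) = (if j = k then hh j else 0)) \<and>
     lie_generated sc br (H \<union> range e \<union> range f) = UNIV \<and>
     (\<exists>G. Z_grading sc br G \<and> H \<subseteq> G 0 \<and> (\<forall>j. e j \<in> G 1 \<and> f j \<in> G (-1)) \<and>
          (\<forall>I. graded_ideal sc br G I \<and> I \<inter> H = {0} \<longrightarrow> I = {0}))"

end

theory Submission
  imports Defs "HOL-Computational_Algebra.Primes"
begin

inductive_set gspan :: "('k::field \<Rightarrow> 'L::ab_group_add \<Rightarrow> 'L) \<Rightarrow> ('L \<Rightarrow> 'L \<Rightarrow> 'L) \<Rightarrow> 'L \<Rightarrow> 'L set \<Rightarrow> 'L set"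
  for sc br y Ops where
  g_base: "y \<in> gspan sc br y Ops"
| g_zero: "0 \<in> gspan sc br y Ops"
| g_add: "u \<in> gspan sc br y Ops \<Longrightarrow> v \<in> gspan sc br y Ops \<Longrightarrow> u + v \<in> gspan sc br y Ops"
| g_sc: "v \<in> gspan sc br y Ops \<Longrightarrow> sc a v \<in> gspan sc br y Ops"
| g_op: "g \<in> Ops \<Longrightarrow> v \<in> gspan sc br y Ops \<Longrightarrow> br g v \<in> gspan sc br y Ops"

lemma sum_supp_superset:
  fixes c :: "int \<Rightarrow> 'L::ab_group_add"
  assumes "finite F" "{n. c n \<noteq> 0} \<subseteq> F"
  shows "sum c {n. c n \<noteq> 0} = sum c F"
  using assms by (intro sum.mono_neutral_left) auto

locale lie =
  fixes sc :: "'k::field \<Rightarrow> 'L::ab_group_add \<Rightarrow> 'L" and br :: "'L \<Rightarrow> 'L \<Rightarrow> 'L"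
  assumes lie: "lie_algebra sc br"
begin

sublocale vector_space sc using lie unfolding lie_algebra_def by blast

lemma br_add_l: "br (x + y) z = br x z + br y z" using lie unfolding lie_algebra_def by blast
lemma br_add_r: "br x (y + z) = br x y + br x z" using lie unfolding lie_algebra_def by blast
lemma br_sc_l: "br (sc a x) y = sc a (br x y)" using lie unfolding lie_algebra_def by blast
lemma br_sc_r: "br x (sc a y) = sc a (br x y)" using lie unfolding lie_algebra_def by blast
lemma br_self: "br x x = 0" using lie unfolding lie_algebra_def by blast
lemma jacobi: "br x (br y z) + br y (br z x) + br z (br x y) = 0"
  using lie unfolding lie_algebra_def by blast

lemma br_zero_l[simp]: "br 0 x = 0" using br_add_l[of 0 0 x] by simp
lemma br_zero_r[simp]: "br x 0 = 0" using br_add_r[of x 0 0] by simp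
lemma br_neg_l: "br (- x) y = - br x y"
  using br_add_l[of x "-x" y] by (simp add: eq_neg_iff_add_eq_0 add.commute)
lemma br_neg_r: "br x (- y) = - br x y"
  using br_add_r[of x y "-y"] by (simp add: eq_neg_iff_add_eq_0 add.commute)
lemma br_antisym: "br x y = - br y x"
proof -
  have "0 = br (x+y) (x+y)" by (rule br_self[symmetric])
  also have "\<dots> = (br x x + br y x) + (br x y + br y y)" by (simp only: br_add_l br_add_r)
  also have "\<dots> = br y x + br x y" by (simp add: br_self)
  finally have "br y x + br x y = 0" by (simp add: add.commute)
  then show ?thesis by (metis add.commute eq_neg_iff_add_eq_0)
qed
lemma br_diff_l: "br (x - y) z = br x z - br y z"
  using br_add_l[of x "-y" z] by (simp add: br_neg_l)
lemma br_diff_r: "br x (y - z) = br x y - br x z"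
  using br_add_r[of x y "-z"] by (simp add: br_neg_r)

lemma jac2: "br a (br b c) = br (br a b) c + br b (br a c)"
proof -
  have j: "br a (br b c) + br b (br c a) + br c (br a b) = 0" by (rule jacobi)
  have 1: "br b (br c a) = - br b (br a c)" by (metis br_antisym br_neg_r)
  have 2: "br c (br a b) = - br (br a b) c" by (rule br_antisym)
  from j show ?thesis unfolding 1 2 by (simp add: algebra_simps eq_neg_iff_add_eq_0)
qed

lemma br_sum_r: "br x (sum g S) = (\<Sum>i\<in>S. br x (g i))"
  by (induct S rule: infinite_finite_induct) (auto simp: br_add_r)

lemma pow_add: "(br x ^^ n) (u + v) = (br x ^^ n) u + (br x ^^ n) v"
  by (induct n) (auto simp: br_add_r)
lemma pow_zero: "(br x ^^ n) 0 = 0"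
  by (induct n) auto
lemma pow_sc: "(br x ^^ n) (sc a u) = sc a ((br x ^^ n) u)"
  by (induct n) (auto simp: br_sc_r)

lemma leibniz:
  "(br x ^^ n) (br y z) =
     (\<Sum>k\<le>n. sc (of_nat (n choose k)) (br ((br x ^^ k) y) ((br x ^^ (n - k)) z)))"
proof (induct n)
  case 0 show ?case by simp
next
  case (Suc n)
  define F where "F k l = br ((br x ^^ k) y) ((br x ^^ l) z)" for k l
  have DF: "br x (F k l) = F (Suc k) l + F k (Suc l)" for k l
    unfolding F_def funpow.simps comp_apply by (rule jac2)
  have IH: "(br x ^^ n) (br y z) = (\<Sum>k\<le>n. sc (of_nat (n choose k)) (F k (n - k)))"
    using Suc unfolding F_def by simp
  have "(br x ^^ Suc n) (br y z) = br x (\<Sum>k\<le>n. sc (of_nat (n choose k)) (F k (n - k)))"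
    using IH by simp
  also have "\<dots> = (\<Sum>k\<le>n. sc (of_nat (n choose k)) (F (Suc k) (n - k)))
       + (\<Sum>k\<le>n. sc (of_nat (n choose k)) (F k (Suc n - k)))"
    by (simp add: br_sum_r br_sc_r DF scale_right_distrib sum.distrib Suc_diff_le)
  also have "(\<Sum>k\<le>n. sc (of_nat (n choose k)) (F k (Suc n - k)))
      = (\<Sum>k\<le>Suc n. sc (of_nat (n choose k)) (F k (Suc n - k)))"
    by (simp add: binomial_eq_0)
  also have "\<dots> = F 0 (Suc n) + (\<Sum>k\<le>n. sc (of_nat (n choose Suc k)) (F (Suc k) (n - k)))"
    by (simp add: sum.atMost_Suc_shift del: sum.atMost_Suc)
  also have "(\<Sum>k\<le>n. sc (of_nat (n choose k)) (F (Suc k) (n - k))) +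
      (F 0 (Suc n) + (\<Sum>k\<le>n. sc (of_nat (n choose Suc k)) (F (Suc k) (n - k))))
    = (\<Sum>k\<le>Suc n. sc (of_nat (Suc n choose k)) (F k (Suc n - k)))"
    by (simp add: sum.atMost_Suc_shift scale_left_distrib sum.distrib add_ac del: sum.atMost_Suc)
  finally show ?case unfolding F_def .
qed

end

lemma double_T: "2 * (\<Sum>k<Suc q. k) = Suc q * (q::nat)"
  by (induct q) (simp_all add: algebra_simps)

locale core = lie sc br for sc :: "'k::field \<Rightarrow> 'L::ab_group_add \<Rightarrow> 'L" and br +
  fixes H :: "'L set" and hh :: "'n \<Rightarrow> 'L" and xi :: "'n \<Rightarrow> 'L \<Rightarrow> 'k"
    and e f :: "'n \<Rightarrow> 'L" and G :: "int \<Rightarrow> 'L set" and d :: int and p :: nat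
  assumes H_sub: "module.subspace sc H"
    and hh_H: "hh j \<in> H"
    and He: "x \<in> H \<Longrightarrow> br x (e j) = sc (xi j x) (e j)"
    and Hf: "x \<in> H \<Longrightarrow> br x (f j) = - sc (xi j x) (f j)"
    and ef: "br (e j) (f k) = (if j = k then hh j else 0)"
    and gen: "lie_generated sc br (H \<union> range e \<union> range f) = UNIV"
    and grading: "Z_grading sc br G"
    and HG: "H \<subseteq> G 0"
    and eG: "e j \<in> G d"
    and dd: "d * d = 1"
    and ideal0: "graded_ideal sc br G I \<Longrightarrow> I \<inter> H = {0} \<Longrightarrow> I = {0}"
    and prime_p: "prime p" and char_p: "CHAR('k) = p"
    and Aii: "xi j (hh j) = 0 \<or> xi j (hh j) = 2"
begin

lemma G_sub: "subspace (G n)" using grading unfolding Z_grading_def by blast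
lemma G_br: "x \<in> G m \<Longrightarrow> y \<in> G n \<Longrightarrow> br x y \<in> G (m + n)"
  using grading unfolding Z_grading_def by blast
lemma G_uniq: "homog_decomp G x c1 \<Longrightarrow> homog_decomp G x c2 \<Longrightarrow> c1 = c2"
  using grading unfolding Z_grading_def by metis

lemma p2: "p \<ge> 2" using prime_p by (simp add: prime_ge_2_nat)
lemma pSS: "p = Suc (Suc (p - 2))" using p2 by simp
lemma charp: "(of_nat p :: 'k) = 0" by (simp add: of_nat_eq_0_iff_char_dvd char_p)
lemma choose0: "0 < k \<Longrightarrow> k < p \<Longrightarrow> (of_nat (p choose k) :: 'k) = 0"
  by (simp add: of_nat_eq_0_iff_char_dvd char_p dvd_choose_prime prime_p)

lemma br_fe: "br (f k) (e j) = (if j = k then - hh j else 0)"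
  using ef[of j k] br_antisym[of "f k" "e j"] by simp

lemma pow_S: "(br x ^^ Suc m) v = (br x ^^ m) (br x v)"
  by (simp only: funpow_Suc_right comp_apply)
lemma pow_SS: "(br x ^^ Suc (Suc m)) v = (br x ^^ m) (br x (br x v))"
  by (simp only: funpow_Suc_right comp_apply)

lemma EEH: "h \<in> H \<Longrightarrow> br (e i) (br (e i) h) = 0"
proof -
  assume h: "h \<in> H"
  have "br (e i) h = - sc (xi i h) (e i)" using br_antisym[of "e i" h] He[OF h] by simp
  then show ?thesis by (simp add: br_neg_r br_sc_r br_self)
qed

lemma EpH: "h \<in> H \<Longrightarrow> (br (e i) ^^ Suc (Suc m)) h = 0"
  by (simp only: pow_SS EEH pow_zero)

lemma Ep_H: "h \<in> H \<Longrightarrow> (br (e i) ^^ p) h = 0"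
  by (metis EpH pSS)

lemma Ep_ei: "(br (e i) ^^ p) (e i) = 0"
  by (metis pow_S br_self pow_zero pSS)

lemma Ep_f: "(br (e i) ^^ p) (f k) = 0"
proof (cases "k = i")
  case False
  then show ?thesis using ef[of i k] pow_S pow_zero pSS by metis
next
  case True
  have eh: "br (e i) (hh i) = - sc (xi i (hh i)) (e i)"
    using br_antisym[of "e i" "hh i"] He[OF hh_H] by simp
  show ?thesis
  proof (cases "p = 2")
    case True
    have "(2::'k) = 0" using charp True by simp
    then have "xi i (hh i) = 0" using Aii[of i] by auto
    then have "br (e i) (br (e i) (f k)) = 0" using ef[of i i] eh \<open>k = i\<close> by simp
    then show ?thesis using True pow_SS[where x="e i" and m=0 and v="f k"] by (simp add: numeral_2_eq_2 del: funpow.simps)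
  next
    case False
    then have p3: "p = Suc (Suc (Suc (p - 3)))" using p2 by simp
    have "(br (e i) ^^ p) (f k) = (br (e i) ^^ Suc (Suc (p-3))) (br (e i) (f k))"
      using p3 pow_S by metis
    also have "\<dots> = 0" using ef[of i i] \<open>k = i\<close> EpH[OF hh_H] by simp
    finally show ?thesis .
  qed
qed

lemma Ep_ej:
  assumes ji: "j \<noteq> i"
  shows "(br (e i) ^^ p) (e j) = 0"
proof -
  define z where "z r = (br (e i) ^^ r) (e j)" for r
  define ci where "ci = xi i (hh i)"
  define cj where "cj = xi j (hh i)"
  have zS: "z (Suc r) = br (e i) (z r)" for r unfolding z_def by simp
  have zG: "z r \<in> G ((int r + 1) * d)" for r
  proof (induct r)
    case 0 show ?case using eG by (simp add: z_def)
  next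
    case (Suc r)
    have "br (e i) (z r) \<in> G (d + (int r + 1) * d)" by (rule G_br[OF eG Suc])
    moreover have "d + (int r + 1) * d = (int (Suc r) + 1) * d" by (simp add: algebra_simps)
    ultimately show ?case by (simp add: zS)
  qed
  have zh: "br (hh i) (z r) = sc (of_nat r * ci + cj) (z r)" for r
  proof (induct r)
    case 0 show ?case using He[OF hh_H, of i j] by (simp add: z_def cj_def)
  next
    case (Suc r)
    have "br (hh i) (z (Suc r)) = br (br (hh i) (e i)) (z r) + br (e i) (br (hh i) (z r))"
      unfolding zS by (rule jac2)
    also have "\<dots> = sc ci (z (Suc r)) + sc (of_nat r * ci + cj) (z (Suc r))"
      using He[OF hh_H, of i i] Suc by (simp add: br_sc_l br_sc_r zS ci_def)
    also have "\<dots> = sc (ci + (of_nat r * ci + cj)) (z (Suc r))"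
      by (rule scale_left_distrib[symmetric])
    also have "ci + (of_nat r * ci + cj) = of_nat (Suc r) * ci + cj"
      by (simp add: algebra_simps)
    finally show ?case .
  qed
  define T where "T r = (\<Sum>k<r. k)" for r :: nat
  define s where "s r = - (of_nat (T r) * ci + of_nat r * cj)" for r
  have fi0: "br (f i) (e j) = 0" using br_fe[of i j] ji by simp
  have fii: "br (f i) (e i) = - hh i" using br_fe[of i i] by simp
  have zf: "br (f i) (z (Suc r)) = sc (s (Suc r)) (z r)" for r
  proof (induct r)
    case 0
    have "br (f i) (z (Suc 0)) = br (f i) (br (e i) (e j))" by (simp add: z_def)
    also have "\<dots> = br (br (f i) (e i)) (e j) + br (e i) (br (f i) (e j))" by (rule jac2)
    also have "\<dots> = - sc cj (e j)" using He[OF hh_H, of i j]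
      by (simp add: fii fi0 br_neg_l cj_def)
    also have "\<dots> = sc (s (Suc 0)) (z 0)" by (simp add: s_def T_def z_def)
    finally show ?case .
  next
    case (Suc r)
    have "br (f i) (z (Suc (Suc r))) = br (br (f i) (e i)) (z (Suc r)) + br (e i) (br (f i) (z (Suc r)))"
      unfolding zS[of "Suc r"] by (rule jac2)
    also have "\<dots> = - sc (of_nat (Suc r) * ci + cj) (z (Suc r)) + sc (s (Suc r)) (z (Suc r))"
      using Suc zh[of "Suc r"] by (simp add: fii br_neg_l br_sc_r zS)
    also have "\<dots> = sc (s (Suc r) - (of_nat (Suc r) * ci + cj)) (z (Suc r))"
      by (simp add: scale_left_diff_distrib)
    also have "s (Suc r) - (of_nat (Suc r) * ci + cj) = s (Suc (Suc r))"
      by (simp add: s_def T_def algebra_simps)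
    finally show ?case .
  qed
  have sp: "s p = 0"
  proof (cases "p = 2")
    case True
    have two: "(2::'k) = 0" using charp True by simp
    then have "ci = 0" using Aii[of i] by (auto simp: ci_def)
    moreover have "T 2 = 1" by (simp add: T_def numeral_2_eq_2)
    ultimately show ?thesis using True two by (simp add: s_def)
  next
    case False
    obtain q where q: "p = Suc q" using p2 by (cases p) auto
    have "2 * T p = p * q" unfolding T_def q by (rule double_T)
    then have "p dvd 2 * T p" by simp
    then have "p dvd 2 \<or> p dvd T p" using prime_p by (simp add: prime_dvd_mult_iff)
    moreover have "\<not> p dvd 2"
    proof
      assume "p dvd 2"
      then have "p \<le> 2" by (simp add: dvd_imp_le)
      with p2 False show False by simp
    qed
    ultimately have "p dvd T p" by blast
    then have "(of_nat (T p) :: 'k) = 0" by (simp add: of_nat_eq_0_iff_char_dvd char_p)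
    then show ?thesis by (simp add: s_def charp)
  qed
  have yfi: "br (f i) (z p) = 0"
    using zf[of "p - 1"] sp p2 by (simp add: Suc_diff_1 del: funpow.simps)
  have zfk: "br (f k) (z r) = (br (e i) ^^ r) (br (f k) (e j))" if ki: "k \<noteq> i" for k r
  proof (induct r)
    case 0 show ?case by (simp add: z_def)
  next
    case (Suc r)
    have "br (f k) (z (Suc r)) = br (br (f k) (e i)) (z r) + br (e i) (br (f k) (z r))"
      unfolding zS by (rule jac2)
    also have "\<dots> = br (e i) (br (f k) (z r))" using br_fe[of k i] ki by simp
    finally show ?case using Suc by simp
  qed
  have yfk: "br (f k) (z p) = 0" for k
  proof (cases "k = i")
    case True then show ?thesis using yfi by simp
  next
    case False
    then have "br (f k) (z p) = (br (e i) ^^ p) (if j = k then - hh j else 0)"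
      using zfk br_fe by simp
    also have "\<dots> = 0"
      using Ep_H[OF subspace_neg[OF H_sub hh_H]] pow_zero by simp
    finally show ?thesis .
  qed
  define y where "y = z p"
  define V where "V = gspan sc br y (range e \<union> H)"
  have V_base: "y \<in> V" unfolding V_def by (rule g_base)
  have V_zero: "0 \<in> V" unfolding V_def by (rule g_zero)
  have V_add: "u \<in> V \<Longrightarrow> v \<in> V \<Longrightarrow> u + v \<in> V" for u v unfolding V_def by (rule g_add)
  have V_sc: "v \<in> V \<Longrightarrow> sc a v \<in> V" for a v unfolding V_def by (rule g_sc)
  have V_op: "g \<in> range e \<union> H \<Longrightarrow> v \<in> V \<Longrightarrow> br g v \<in> V" for g v unfolding V_def by (rule g_op)
  have V_sub: "subspace V" unfolding subspace_def using V_zero V_add V_sc by blast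
  have V_f: "br (f k) v \<in> V" if "v \<in> V" for v k
    using that[unfolded V_def]
  proof (induct rule: gspan.induct)
    case g_base show ?case using yfk V_zero by (simp add: y_def)
  next
    case g_zero show ?case using V_zero by simp
  next
    case (g_add u v) then show ?case using V_add by (simp add: br_add_r)
  next
    case (g_sc v a) then show ?case using V_sc by (simp add: br_sc_r)
  next
    case (g_op g v)
    have jj: "br (f k) (br g v) = br (br (f k) g) v + br g (br (f k) v)" by (rule jac2)
    have 1: "br g (br (f k) v) \<in> V" using V_op g_op by blast
    have 2: "br (br (f k) g) v \<in> V"
    proof (cases "g \<in> H")
      case True
      have "br (f k) g = sc (xi k g) (f k)" using br_antisym[of "f k" g] Hf[OF True] by simp
      then show ?thesis using V_sc g_op by (simp add: br_sc_l)
    next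
      case False
      then obtain j' where g: "g = e j'" using g_op by auto
      show ?thesis
      proof (cases "j' = k")
        case True
        have vV: "v \<in> V" using g_op by (simp add: V_def)
        have hv: "br (hh j') v \<in> V" using V_op[of "hh j'" v] hh_H vV by blast
        have "br (br (f k) g) v = sc (-1) (br (hh j') v)" using g True br_fe[of k j']
          by (simp add: br_neg_l)
        then show ?thesis using V_sc[OF hv, of "-1"] by simp
      next
        case False
        then show ?thesis using g br_fe[of k j'] V_zero by simp
      qed
    qed
    show ?case using jj 1 2 V_add by simp
  qed
  define Ts where "Ts = {x. \<forall>v\<in>V. br x v \<in> V}"
  have Ts_sub: "lie_subalgebra sc br Ts"
    unfolding lie_subalgebra_def subspace_def
  proof (intro conjI ballI allI)
    show "0 \<in> Ts" using V_zero by (simp add: Ts_def)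
    show "x + y \<in> Ts" if "x \<in> Ts" "y \<in> Ts" for x y
      using that V_add by (simp add: Ts_def br_add_l)
    show "sc c x \<in> Ts" if "x \<in> Ts" for c x
      using that V_sc by (simp add: Ts_def br_sc_l)
    show "br x y \<in> Ts" if "x \<in> Ts" "y \<in> Ts" for x y
    proof -
      have "br (br x y) v = br x (br y v) - br y (br x v)" for v
        using jac2[of x y v] by (simp add: algebra_simps)
      then show ?thesis using that subspace_diff[OF V_sub] by (simp add: Ts_def)
    qed
  qed
  have "H \<union> range e \<union> range f \<subseteq> Ts"
    using V_op V_f by (auto simp: Ts_def)
  then have "lie_generated sc br (H \<union> range e \<union> range f) \<subseteq> Ts"
    unfolding lie_generated_def using Ts_sub by (intro Inter_lower) auto
  then have Ts_univ: "Ts = UNIV" using gen by auto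
  have V_ideal: "lie_ideal sc br V" unfolding lie_ideal_def using V_sub Ts_univ
    by (auto simp: Ts_def)
  have decomp: "\<exists>c. homog_decomp G v c \<and> (\<forall>n. c n \<in> V) \<and> (\<forall>n. c n \<noteq> 0 \<longrightarrow> n * d > 0)"
    if "v \<in> V" for v
    using that[unfolded V_def]
  proof (induct rule: gspan.induct)
    case g_base
    define c where "c n = (if n = (int p + 1) * d then y else 0)" for n
    have supp: "{n. c n \<noteq> 0} \<subseteq> {(int p + 1) * d}" by (auto simp: c_def)
    have "homog_decomp G y c" unfolding homog_decomp_def
    proof (intro conjI allI)
      show "finite {n. c n \<noteq> 0}" using supp finite_subset by blast
      show "c n \<in> G n" for n using zG[of p] subspace_0[OF G_sub] by (simp add: c_def y_def)
      show "y = sum c {n. c n \<noteq> 0}" using sum_supp_superset[OF _ supp] by (simp add: c_def)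
    qed
    moreover have "\<forall>n. c n \<in> V" using V_base V_zero by (simp add: c_def)
    moreover have "\<forall>n. c n \<noteq> 0 \<longrightarrow> n * d > 0"
    proof (intro allI impI)
      fix n assume "c n \<noteq> 0"
      then have "n = (int p + 1) * d" by (simp add: c_def split: if_splits)
      then have "n * d = (int p + 1) * (d * d)" by (simp add: algebra_simps)
      then show "n * d > 0" using dd by simp
    qed
    ultimately show ?case by blast
  next
    case g_zero
    have "homog_decomp G 0 (\<lambda>_. 0)" unfolding homog_decomp_def
      using subspace_0[OF G_sub] by simp
    then show ?case using V_zero by auto
  next
    case (g_add u v)
    from g_add obtain c1 where c1: "homog_decomp G u c1" "\<forall>n. c1 n \<in> V" "\<forall>n. c1 n \<noteq> 0 \<longrightarrow> n * d > 0"
      by blast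
    from g_add obtain c2 where c2: "homog_decomp G v c2" "\<forall>n. c2 n \<in> V" "\<forall>n. c2 n \<noteq> 0 \<longrightarrow> n * d > 0"
      by blast
    define c where "c n = c1 n + c2 n" for n
    define F where "F = {n. c1 n \<noteq> 0} \<union> {n. c2 n \<noteq> 0}"
    have fF: "finite F" using c1(1) c2(1) by (simp add: F_def homog_decomp_def)
    have supp: "{n. c n \<noteq> 0} \<subseteq> F" by (auto simp: F_def c_def)
    have "homog_decomp G (u + v) c" unfolding homog_decomp_def
    proof (intro conjI allI)
      show "finite {n. c n \<noteq> 0}" using supp fF finite_subset by blast
      show "c n \<in> G n" for n using c1(1) c2(1) subspace_add[OF G_sub]
        by (simp add: c_def homog_decomp_def)
      have "sum c {n. c n \<noteq> 0} = sum c F" by (rule sum_supp_superset[OF fF supp])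
      also have "\<dots> = sum c1 F + sum c2 F" by (simp add: c_def sum.distrib)
      also have "sum c1 F = u"
        using c1(1) sum_supp_superset[OF fF, of c1] by (auto simp: homog_decomp_def F_def)
      also have "sum c2 F = v"
        using c2(1) sum_supp_superset[OF fF, of c2] by (auto simp: homog_decomp_def F_def)
      finally show "u + v = sum c {n. c n \<noteq> 0}" by simp
    qed
    moreover have "\<forall>n. c n \<in> V" using c1(2) c2(2) V_add by (simp add: c_def)
    moreover have "\<forall>n. c n \<noteq> 0 \<longrightarrow> n * d > 0" using c1(3) c2(3) by (metis add.right_neutral add_0 c_def)
    ultimately show ?case by blast
  next
    case (g_sc v a)
    from g_sc obtain c0 where c0: "homog_decomp G v c0" "\<forall>n. c0 n \<in> V" "\<forall>n. c0 n \<noteq> 0 \<longrightarrow> n * d > 0"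
      by blast
    define c where "c n = sc a (c0 n)" for n
    define F where "F = {n. c0 n \<noteq> 0}"
    have fF: "finite F" using c0(1) by (simp add: F_def homog_decomp_def)
    have supp: "{n. c n \<noteq> 0} \<subseteq> F" by (auto simp: F_def c_def)
    have "homog_decomp G (sc a v) c" unfolding homog_decomp_def
    proof (intro conjI allI)
      show "finite {n. c n \<noteq> 0}" using supp fF finite_subset by blast
      show "c n \<in> G n" for n using c0(1) subspace_scale[OF G_sub]
        by (simp add: c_def homog_decomp_def)
      have "sum c {n. c n \<noteq> 0} = sum c F" by (rule sum_supp_superset[OF fF supp])
      also have "\<dots> = sc a (sum c0 F)" by (simp add: c_def scale_sum_right)
      also have "sum c0 F = v" using c0(1) by (simp add: homog_decomp_def F_def)
      finally show "sc a v = sum c {n. c n \<noteq> 0}" by simp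
    qed
    moreover have "\<forall>n. c n \<in> V" using c0(2) V_sc by (simp add: c_def)
    moreover have "\<forall>n. c n \<noteq> 0 \<longrightarrow> n * d > 0" using c0(3) by (auto simp: c_def)
    ultimately show ?case by blast
  next
    case (g_op g v)
    from g_op obtain c0 where c0: "homog_decomp G v c0" "\<forall>n. c0 n \<in> V" "\<forall>n. c0 n \<noteq> 0 \<longrightarrow> n * d > 0"
      by blast
    obtain m where gm: "g \<in> G m" and md: "m * d \<ge> 0"
    proof (cases "g \<in> H")
      case True then show ?thesis using that[of 0] HG by auto
    next
      case False
      then obtain j' where "g = e j'" using g_op by auto
      then show ?thesis using that[of d] eG dd by auto
    qed
    define c where "c n = br g (c0 (n - m))" for n
    define F where "F = {n. c0 n \<noteq> 0}"
    have fF: "finite F" using c0(1) by (simp add: F_def homog_decomp_def)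
    have supp: "{n. c n \<noteq> 0} \<subseteq> (\<lambda>n. n + m) ` F"
    proof
      fix n assume "n \<in> {n. c n \<noteq> 0}"
      then have "c0 (n - m) \<noteq> 0" by (auto simp: c_def)
      then have "n - m \<in> F" by (simp add: F_def)
      then show "n \<in> (\<lambda>n. n + m) ` F" by (intro image_eqI[of _ _ "n - m"]) auto
    qed
    have fF2: "finite ((\<lambda>n. n + m) ` F)" using fF by simp
    have "homog_decomp G (br g v) c" unfolding homog_decomp_def
    proof (intro conjI allI)
      show "finite {n. c n \<noteq> 0}" using supp fF2 finite_subset by blast
      show "c n \<in> G n" for n
      proof -
        have "c0 (n - m) \<in> G (n - m)" using c0(1) by (simp add: homog_decomp_def)
        then have "br g (c0 (n - m)) \<in> G (m + (n - m))" by (rule G_br[OF gm])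
        then show ?thesis by (simp add: c_def)
      qed
      have "sum c {n. c n \<noteq> 0} = sum c ((\<lambda>n. n + m) ` F)" by (rule sum_supp_superset[OF fF2 supp])
      also have "\<dots> = sum (c \<circ> (\<lambda>n. n + m)) F" by (rule sum.reindex) (simp add: inj_on_def)
      also have "\<dots> = sum (\<lambda>n. br g (c0 n)) F" by (simp add: c_def)
      also have "\<dots> = br g (sum c0 F)" by (simp add: br_sum_r)
      also have "sum c0 F = v" using c0(1) by (simp add: homog_decomp_def F_def)
      finally show "br g v = sum c {n. c n \<noteq> 0}" by simp
    qed
    moreover have "\<forall>n. c n \<in> V" using c0(2) V_op g_op by (simp add: c_def)
    moreover have "\<forall>n. c n \<noteq> 0 \<longrightarrow> n * d > 0"
    proof (intro allI impI)
      fix n assume "c n \<noteq> 0"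
      then have "c0 (n - m) \<noteq> 0" by (auto simp: c_def)
      then have "(n - m) * d > 0" using c0(3) by blast
      moreover have "n * d = (n - m) * d + m * d" by (simp add: algebra_simps)
      ultimately show "n * d > 0" using md by simp
    qed
    ultimately show ?case by blast
  qed
  have "graded_ideal sc br G V" unfolding graded_ideal_def
  proof (intro conjI ballI allI impI)
    show "lie_ideal sc br V" by (rule V_ideal)
    fix x c n assume x: "x \<in> V" and hc: "homog_decomp G x c"
    obtain c0 where c0: "homog_decomp G x c0" "\<forall>n. c0 n \<in> V" using decomp[OF x] by blast
    have "c = c0" using G_uniq[OF hc c0(1)] .
    then show "c n \<in> V" using c0(2) by simp
  qed
  moreover have "V \<inter> H = {0}"
  proof
    show "{0} \<subseteq> V \<inter> H" using V_zero subspace_0[OF H_sub] by simp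
    show "V \<inter> H \<subseteq> {0}"
    proof
      fix x assume x: "x \<in> V \<inter> H"
      obtain c where c: "homog_decomp G x c" "\<forall>n. c n \<noteq> 0 \<longrightarrow> n * d > 0"
        using decomp x by blast
      define c0 where "c0 n = (if n = 0 then x else 0)" for n :: int
      have supp: "{n. c0 n \<noteq> 0} \<subseteq> {0}" by (auto simp: c0_def)
      have "homog_decomp G x c0" unfolding homog_decomp_def
      proof (intro conjI allI)
        show "finite {n. c0 n \<noteq> 0}" using supp finite_subset by blast
        show "c0 n \<in> G n" for n using x HG subspace_0[OF G_sub] by (auto simp: c0_def)
        show "x = sum c0 {n. c0 n \<noteq> 0}" using sum_supp_superset[OF _ supp] by (simp add: c0_def)
      qed
      then have "c = c0" using G_uniq c(1) by blast
      then have "c 0 = x" by (simp add: c0_def)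
      then show "x \<in> {0}" using c(2) by auto
    qed
  qed
  ultimately have "V = {0}" by (rule ideal0)
  then have "y = 0" using V_base by simp
  then show ?thesis by (simp add: y_def z_def)
qed

lemma Ep_zero: "(br (e i) ^^ p) x = 0"
proof -
  define D where "D = br (e i) ^^ p"
  have Dder: "D (br u v) = br (D u) v + br u (D v)" for u v
  proof -
    have "D (br u v) = (\<Sum>k\<le>p. sc (of_nat (p choose k)) (br ((br (e i) ^^ k) u) ((br (e i) ^^ (p - k)) v)))"
      unfolding D_def by (rule leibniz)
    also have "\<dots> = (\<Sum>k\<in>{0,p}. sc (of_nat (p choose k)) (br ((br (e i) ^^ k) u) ((br (e i) ^^ (p - k)) v)))"
      by (rule sum.mono_neutral_right) (auto simp: choose0)
    also have "\<dots> = br (D u) v + br u (D v)" using p2 by (simp add: D_def add.commute)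
    finally show ?thesis .
  qed
  define K where "K = {x. D x = 0}"
  have K_sub: "lie_subalgebra sc br K"
    unfolding lie_subalgebra_def subspace_def K_def
    by (auto simp: D_def pow_zero pow_add pow_sc Dder[unfolded D_def])
  have "H \<union> range e \<union> range f \<subseteq> K"
  proof -
    have "e j \<in> K" for j
      by (cases "j = i") (auto simp: K_def D_def Ep_ei Ep_ej)
    then show ?thesis using Ep_H Ep_f by (auto simp: K_def D_def)
  qed
  then have "lie_generated sc br (H \<union> range e \<union> range f) \<subseteq> K"
    unfolding lie_generated_def using K_sub by (intro Inter_lower) auto
  then have "K = UNIV" using gen by auto
  then show ?thesis by (auto simp: K_def D_def)
qed

end

theorem lemma4p2:
  fixes sc :: "'k::field \<Rightarrow> 'L::ab_group_add \<Rightarrow> 'L"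
    and br :: "'L \<Rightarrow> 'L \<Rightarrow> 'L"
    and A :: "'n::finite \<Rightarrow> 'n \<Rightarrow> 'k"
    and H :: "'L set" and hh :: "'n \<Rightarrow> 'L" and xi :: "'n \<Rightarrow> 'L \<Rightarrow> 'k"
    and e f :: "'n \<Rightarrow> 'L" and p :: nat
  assumes "prime p" and "CHAR('k) = p" and "alg_closed_field TYPE('k)"
    and "\<forall>j. A j j = 0 \<or> A j j = 2"
    and "\<forall>j k. j \<noteq> k \<longrightarrow> (A j k = 0 \<longleftrightarrow> A k j = 0)"
    and "contragredient sc br A H hh xi e f"
    and "\<exists>S. finite S \<and> module.span sc S = UNIV"
  shows "\<forall>i x. (br (e i) ^^ p) x = 0 \<and> (br (f i) ^^ p) x = 0"
proof -
  note C = assms(6)[unfolded contragredient_def]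
  have lie: "lie_algebra sc br" using C by blast
  interpret L: lie sc br by (rule lie.intro[OF lie])
  have Hs: "module.subspace sc H" using C by blast
  have xisc: "\<forall>k a. \<forall>x\<in>H. xi k (sc a x) = a * xi k x" using C by blast
  have hhH: "\<forall>j. hh j \<in> H" using C by blast
  have xihh: "\<forall>j k. xi k (hh j) = A j k" using C by blast
  have He: "\<forall>x\<in>H. \<forall>j. br x (e j) = sc (xi j x) (e j)" using C by blast
  have Hf: "\<forall>x\<in>H. \<forall>j. br x (f j) = - sc (xi j x) (f j)" using C by blast
  have ef: "\<forall>j k. br (e j) (f k) = (if j = k then hh j else 0)" using C by blast
  have gen: "lie_generated sc br (H \<union> range e \<union> range f) = UNIV" using C by blast
  have ex: "\<exists>G. Z_grading sc br G \<and> H \<subseteq> G 0 \<and> (\<forall>j. e j \<in> G 1 \<and> f j \<in> G (- 1)) \<and>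
          (\<forall>I. graded_ideal sc br G I \<and> I \<inter> H = {0} \<longrightarrow> I = {0})"
    using C by (elim conjE) assumption
  obtain G where G: "Z_grading sc br G" "H \<subseteq> G 0" "\<forall>j. e j \<in> G 1 \<and> f j \<in> G (-1)"
    "\<forall>I. graded_ideal sc br G I \<and> I \<inter> H = {0} \<longrightarrow> I = {0}"
    using ex by blast
  have Aii: "xi j (hh j) = 0 \<or> xi j (hh j) = 2" for j using assms(4) xihh by simp
  interpret C1: core sc br H hh xi e f G 1 p
    by (unfold_locales) (use Hs hhH He Hf ef gen G Aii assms(1,2) in auto)
  have neg: "- hh j = sc (-1) (hh j)" for j by simp
  have xineg: "- xi j (- hh j) = xi j (hh j)" for j
    using xisc hhH by (simp only: neg) simp
  have gen2: "lie_generated sc br (H \<union> range f \<union> range e) = UNIV"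
    using gen by (simp add: Un_ac)
  interpret C2: core sc br H "\<lambda>j. - hh j" "\<lambda>k x. - xi k x" f e G "-1" p
  proof (unfold_locales)
    show "module.subspace sc H" by (rule Hs)
    show "- hh j \<in> H" for j using L.subspace_neg[OF Hs] hhH by blast
    show "x \<in> H \<Longrightarrow> br x (f j) = sc (- xi j x) (f j)" for x j using Hf by simp
    show "x \<in> H \<Longrightarrow> br x (e j) = - sc (- xi j x) (e j)" for x j using He by simp
    show "br (f j) (e k) = (if j = k then - hh j else 0)" for j k
      using ef L.br_antisym[of "f j" "e k"] by simp
    show "lie_generated sc br (H \<union> range f \<union> range e) = UNIV" by (rule gen2)
    show "Z_grading sc br G" using G by blast
    show "H \<subseteq> G 0" using G by blast
    show "f j \<in> G (-1)" for j using G by blast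
    show "(-1::int) * -1 = 1" by simp
    show "graded_ideal sc br G I \<Longrightarrow> I \<inter> H = {0} \<Longrightarrow> I = {0}" for I using G by blast
    show "prime p" "CHAR('k) = p" using assms(1,2) by auto
    show "- xi j (- hh j) = 0 \<or> - xi j (- hh j) = 2" for j using xineg Aii by simp
  qed
  show ?thesis using C1.Ep_zero C2.Ep_zero by blast
qed

end
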